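(* Let $A,B\in\mathbb{C}^{n\times n}$ and let $C=A+B$. If $C$ is nonderogatory, then \[\frac{n-d(A)}{\operatorname{rank}(B)+1}\leq|\Lambda(A)|\leq n-d(A).\]
   Context: For $M\in\mathbb{C}^{n\times n}$, $\Lambda(M)$ denotes the set of distinct eigenvalues of $M$ and $|\cdot|$ the cardinality of a set. For $\lambda\in\Lambda(M)$, $m_a(M,\lambda)$ is its algebraic multiplicity and $m_g(M,\lambda)$ its geometric multiplicity. The defectivity of $M$ is $d(M):=\sum_{\lambda\in\Lambda(M)}\big(m_a(M,\lambda)-m_g(M,\lambda)\big)$. $M$ is called nonderogatory if $m_g(M,\lambda)=1$ for every $\lambda\in\Lambda(M)$. *)

theory Defs
  imports "Jordan_Normal_Form.Jordan_Normal_Form_Uniqueness" "Jordan_Normal_Form.DL_Rank"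
begin

definition eigenvalue_set :: "complex mat \<Rightarrow> complex set" where
  "eigenvalue_set M = {k. eigenvalue M k}"

definition alg_mult :: "complex mat \<Rightarrow> complex \<Rightarrow> nat" where
  "alg_mult M k = Polynomial.order k (char_poly M)"

definition geo_mult :: "complex mat \<Rightarrow> complex \<Rightarrow> nat" where
  "geo_mult M k = kernel_dim (char_matrix M k)"

definition defectivity :: "complex mat \<Rightarrow> nat" where
  "defectivity M = (\<Sum>k\<in>eigenvalue_set M. alg_mult M k - geo_mult M k)"

definition nonderogatory :: "complex mat \<Rightarrow> bool" where
  "nonderogatory M \<longleftrightarrow> (\<forall>k\<in>eigenvalue_set M. geo_mult M k = 1)"

end

theory Submission
  imports Defs "Jordan_Normal_Form.Jordan_Normal_Form_Existence"
begin



lemma rank_nullity_mat: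
  fixes M :: "'a::field mat"
  assumes M: "M \<in> carrier_mat n n"
  shows "vec_space.rank n M + kernel_dim M = n"
proof -
  interpret V: vec_space "TYPE('a)" n .
  interpret K: kernel n n M by (unfold_locales, rule M)
  interpret LM: linear_map class_ring "module_vec TYPE('a) n" "module_vec TYPE('a) n" "\<lambda>v. M *\<^sub>v v"
  proof (unfold_locales)
    show "(\<lambda>v. M *\<^sub>v v) \<in> module_hom class_ring (module_vec TYPE('a) n) (module_vec TYPE('a) n)"
      unfolding module_hom_def using M
      by (auto simp: module_vec_simps mult_add_distrib_mat_vec mult_mat_vec)
  qed
  note rn = LM.rank_nullity[OF V.fin_dim]
  have ker: "LM.kerT = mat_kernel M"
    unfolding mod_hom.ker_def[OF LM.mod_hom_axioms] mat_kernel_def using M by (auto simp: module_vec_simps)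
  have im: "LM.imT = V.col_space M"
    unfolding mod_hom.im_def[OF LM.mod_hom_axioms] V.col_space_eq[OF M] using M by (auto simp: module_vec_simps)
  show ?thesis using rn unfolding ker im V.dim_is_n V.rank_def V.col_space_def K.kernel_dim
    by simp
qed
lemma aux_min1: "0 \<notin> fst ` set xs \<Longrightarrow>
  (\<Sum> n \<leftarrow> map fst [(n, e)\<leftarrow>xs . e = l]. min 1 n) = length (filter (\<lambda>na. snd na = l) xs)"
  by (induct xs) (auto split: prod.splits)

lemma aux_sum: "finite S \<Longrightarrow> snd ` set xs \<subseteq> S \<Longrightarrow>
  (\<Sum>l\<in>S. sum_list (map fst (filter (\<lambda>na. snd na = l) xs))) = sum_list (map fst xs)"
proof (induct xs)
  case Nil then show ?case by simp
next
  case (Cons x xs)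
  have "(\<Sum>l\<in>S. sum_list (map fst (filter (\<lambda>na. snd na = l) (x # xs))))
     = (\<Sum>l\<in>S. (if snd x = l then fst x else 0) + sum_list (map fst (filter (\<lambda>na. snd na = l) xs)))"
    by (intro sum.cong) auto
  also have "\<dots> = fst x + sum_list (map fst xs)"
    using Cons by (simp add: sum.distrib)
  finally show ?case by simp
qed

lemma jnf_facts:
  fixes M :: "complex mat"
  assumes M: "M \<in> carrier_mat n n" and jnf: "jordan_nf M n_as"
  shows "eigenvalue_set M = snd ` set n_as"
    and "geo_mult M l = length (filter (\<lambda>na. snd na = l) n_as)"
    and "alg_mult M l = sum_list (map fst (filter (\<lambda>na. snd na = l) n_as))"
    and "sum_list (map fst n_as) = n"
proof -
  have pos: "0 \<notin> fst ` set n_as" using jnf unfolding jordan_nf_def by auto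
  have cp: "char_poly M \<noteq> 0" using degree_monic_char_poly[OF M] by (metis coeff_0 zero_neq_one)
  show am: "alg_mult M l = sum_list (map fst (filter (\<lambda>na. snd na = l) n_as))" for l
    unfolding alg_mult_def by (rule jordan_nf_order[OF jnf])
  have ev: "l \<in> eigenvalue_set M \<longleftrightarrow> l \<in> snd ` set n_as" for l
  proof
    assume "l \<in> eigenvalue_set M"
    hence "eigenvalue M l" unfolding eigenvalue_set_def by simp
    hence "poly (char_poly M) l = 0" by (rule eigenvalue_root_char_poly[OF M, THEN iffD1])
    hence "Polynomial.order l (char_poly M) > 0" by (rule order_gt_0_iff[OF cp, THEN iffD2])
    hence "alg_mult M l > 0" unfolding alg_mult_def .
    hence "sum_list (map fst (filter (\<lambda>na. snd na = l) n_as)) \<noteq> 0" unfolding am by (rule gr_implies_not0)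
    hence "filter (\<lambda>na. snd na = l) n_as \<noteq> []" by (metis list.map(1) sum_list.Nil)
    then obtain x where x: "x \<in> set n_as" "snd x = l" unfolding filter_empty_conv by blast
    show "l \<in> snd ` set n_as" using x by blast
  next
    assume "l \<in> snd ` set n_as"
    then obtain k where k: "(k, l) \<in> set n_as" by auto
    hence "k \<in> fst ` set n_as" by (rule rev_image_eqI) simp
    have "k \<noteq> 0"
    proof
      assume "k = 0"
      with \<open>k \<in> fst ` set n_as\<close> have "0 \<in> fst ` set n_as" by simp
      with pos show False by contradiction
    qed
    hence "k > 0" by simp
    have "(k,l) \<in> set (filter (\<lambda>na. snd na = l) n_as)" using k by simp
    hence "k \<in> set (map fst (filter (\<lambda>na. snd na = l) n_as))" unfolding set_map by (rule rev_image_eqI) simp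
    hence "k \<le> sum_list (map fst (filter (\<lambda>na. snd na = l) n_as))" by (rule member_le_sum_list) simp
    hence "k \<le> Polynomial.order l (char_poly M)" using am[of l] unfolding alg_mult_def by simp
    hence "Polynomial.order l (char_poly M) > 0" using \<open>k > 0\<close> by simp
    hence "poly (char_poly M) l = 0" by (rule order_gt_0_iff[OF cp, THEN iffD1])
    hence "eigenvalue M l" by (rule eigenvalue_root_char_poly[OF M, THEN iffD2])
    then show "l \<in> eigenvalue_set M" unfolding eigenvalue_set_def by simp
  qed
  show "eigenvalue_set M = snd ` set n_as" using ev by blast
  have "char_matrix M l ^\<^sub>m 1 = char_matrix M l"
    using char_matrix_closed[OF M] by simp
  hence "geo_mult M l = dim_gen_eigenspace M l 1"
    unfolding geo_mult_def dim_gen_eigenspace_def by simp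
  also have "\<dots> = length (filter (\<lambda>na. snd na = l) n_as)"
    unfolding dim_gen_eigenspace[OF jnf] by (rule aux_min1[OF pos])
  finally show "geo_mult M l = length (filter (\<lambda>na. snd na = l) n_as)" .
  from jnf[unfolded jordan_nf_def] have "similar_mat M (jordan_matrix n_as)" by auto
  from similar_matD[OF this] obtain m where "M \<in> carrier_mat m m" "jordan_matrix n_as \<in> carrier_mat m m" by (meson insert_subset)
  then show "sum_list (map fst n_as) = n" using M jordan_matrix_carrier[of n_as] by (metis carrier_matD(1))
qed


lemma aux_len: "0 \<notin> fst ` set xs \<Longrightarrow> length xs \<le> sum_list (map fst xs)"
proof (induct xs)
  case Nil then show ?case by simp
next
  case (Cons x xs)
  have "fst x \<noteq> 0"
  proof
    assume "fst x = 0"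
    hence "0 \<in> fst ` set (x # xs)" by force
    with Cons(2) show False by contradiction
  qed
  moreover have "0 \<notin> fst ` set xs" using Cons(2) by auto
  ultimately show ?case using Cons(1) by simp
qed

theorem corollary4p3:
  fixes A B :: "complex mat" and n :: nat
  assumes "A \<in> carrier_mat n n" and "B \<in> carrier_mat n n"
    and "nonderogatory (A + B)"
  shows "(real n - real (defectivity A)) / (real (vec_space.rank n B) + 1)
           \<le> real (card (eigenvalue_set A))
         \<and> real (card (eigenvalue_set A)) \<le> real n - real (defectivity A)"
proof -
  note A = assms(1) and B = assms(2)
  define C where "C = A + B"
  have C: "C \<in> carrier_mat n n" using A B unfolding C_def by simp
  obtain as where "char_poly A = (\<Prod>a\<leftarrow>as. [:- a, 1:])" using char_poly_factorized[OF A] by auto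
  from jordan_nf_exists[OF A this] obtain n_as where jA: "jordan_nf A n_as" by auto
  obtain bs where "char_poly C = (\<Prod>a\<leftarrow>bs. [:- a, 1:])" using char_poly_factorized[OF C] by auto
  from jordan_nf_exists[OF C this] obtain m_bs where jC: "jordan_nf C m_bs" by auto
  note FA = jnf_facts[OF A jA]
  note FC = jnf_facts[OF C jC]
  have posA: "0 \<notin> fst ` set n_as" using jA unfolding jordan_nf_def by simp
  define L where "L = eigenvalue_set A"
  have finL: "finite L" unfolding L_def FA(1) by simp
  define r where "r = vec_space.rank n B"
  have mg1: "1 \<le> geo_mult A l" if "l \<in> L" for l
  proof -
    from that obtain x where x: "x \<in> set n_as" "snd x = l" unfolding L_def FA(1) by auto
    hence "x \<in> set (filter (\<lambda>na. snd na = l) n_as)" by simp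
    hence "length (filter (\<lambda>na. snd na = l) n_as) > 0" by (rule length_pos_if_in_set)
    thus ?thesis unfolding FA(2) by (simp add: Suc_le_eq)
  qed
  have mgma: "geo_mult A l \<le> alg_mult A l" for l
  proof -
    have "0 \<notin> fst ` set (filter (\<lambda>na. snd na = l) n_as)" using posA by auto
    thus ?thesis unfolding FA(2) FA(3) by (rule aux_len)
  qed
  have summa: "(\<Sum>l\<in>L. alg_mult A l) = n"
    unfolding FA(3) L_def FA(1) using aux_sum[of "snd ` set n_as" n_as] FA(4) by simp
  have mgr: "geo_mult A l \<le> r + 1" for l
  proof -
    let ?CA = "char_matrix A l"
    let ?CC = "char_matrix C l"
    have CA: "?CA \<in> carrier_mat n n" using A by simp
    have CC: "?CC \<in> carrier_mat n n" using C by simp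
    have eq: "?CC = ?CA + B" unfolding char_matrix_def C_def using A B by (intro eq_matI) auto
    have rk: "vec_space.rank n ?CC \<le> vec_space.rank n ?CA + r"
      unfolding eq r_def by (rule vec_space.rank_subadditive[OF CA B])
    have rn1: "vec_space.rank n ?CA + kernel_dim ?CA = n" by (rule rank_nullity_mat[OF CA])
    have rn2: "vec_space.rank n ?CC + kernel_dim ?CC = n" by (rule rank_nullity_mat[OF CC])
    have kc: "kernel_dim ?CC \<le> 1"
    proof (cases "l \<in> eigenvalue_set C")
      case True
      with assms(3) have "geo_mult C l = 1" unfolding nonderogatory_def C_def by auto
      thus ?thesis unfolding geo_mult_def by simp
    next
      case False
      hence "filter (\<lambda>na. snd na = l) m_bs = []" unfolding FC(1) filter_empty_conv by force
      hence "geo_mult C l = 0" unfolding FC(2) by simp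
      thus ?thesis unfolding geo_mult_def by simp
    qed
    have "geo_mult A l = kernel_dim ?CA" unfolding geo_mult_def ..
    thus ?thesis using rk rn1 rn2 kc by linarith
  qed
  have dd: "defectivity A = (\<Sum>l\<in>L. alg_mult A l) - (\<Sum>l\<in>L. geo_mult A l)"
    unfolding defectivity_def L_def[symmetric] by (rule sum_subtractf_nat) (rule mgma)
  have sg_le: "(\<Sum>l\<in>L. geo_mult A l) \<le> (\<Sum>l\<in>L. alg_mult A l)" by (rule sum_mono) (rule mgma)
  have key: "real n - real (defectivity A) = real (\<Sum>l\<in>L. geo_mult A l)"
    using dd summa sg_le by (simp add: of_nat_diff)
  have lo: "card L \<le> (\<Sum>l\<in>L. geo_mult A l)"
  proof -
    have "card L = (\<Sum>l\<in>L. 1)" by simp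
    also have "\<dots> \<le> (\<Sum>l\<in>L. geo_mult A l)" by (rule sum_mono) (rule mg1)
    finally show ?thesis .
  qed
  have hi: "(\<Sum>l\<in>L. geo_mult A l) \<le> card L * (r + 1)"
  proof -
    have "(\<Sum>l\<in>L. geo_mult A l) \<le> (\<Sum>l\<in>L. r + 1)" by (rule sum_mono) (rule mgr)
    also have "\<dots> = card L * (r + 1)" by simp
    finally show ?thesis .
  qed
  have hi': "real (\<Sum>l\<in>L. geo_mult A l) \<le> real (card L) * (real r + 1)"
    using hi by (metis of_nat_1 of_nat_add of_nat_le_iff of_nat_mult)
  have "real (\<Sum>l\<in>L. geo_mult A l) / (real r + 1) \<le> real (card L)"
    using hi' by (simp add: divide_le_eq add_pos_nonneg)
  moreover have "real (card L) \<le> real (\<Sum>l\<in>L. geo_mult A l)" using lo by (simp only: of_nat_le_iff)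
  ultimately show ?thesis unfolding key L_def[symmetric] r_def[symmetric] by simp
qed

end
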